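(* Let $k,d$ be positive integers with $d\ge k$, and let $\alpha,\beta$ be reals with $\beta>0$ and $0\le\alpha\le d\beta$. Let $e'=(e'_1,\dots,e'_k)\in\{1,2\}^k$, and for $j\in[0:k]$ let $v_2(j)=|\{\ell\le j:e'_\ell=2\}|$ and $v_1(j)=j-v_2(j)$. Define $$F^*(e')=\sum_{j=1}^k\min\Big\{\big(d-(e'_j-1)v_1(j)-(2-e'_j)v_2(j)\big)\beta,\ \alpha\Big\}.$$ If $v_1(k)\ge v_2(k)$, then $$F^*(e')\ge v_1(k)\,\alpha+v_2(k)\min\{(d-v_1(k))\beta,\ \alpha\},$$ with equality if $e'$ is sorted, i.e. if $e'_1=\dots=e'_{v_1(k)}=1$.
   Context: $[a:b]=\{a,\dots,b\}$, $[a]=\{1,\dots,a\}$. *)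

theory Defs
  imports Complex_Main
begin

text \<open>The sequence e' = (e'_1,...,e'_k) is modelled as a function e :: nat => nat,
  of which only the values at indices 1..k are relevant.\<close>

definition v2 :: "(nat \<Rightarrow> nat) \<Rightarrow> nat \<Rightarrow> nat" where
  "v2 e j = card {l \<in> {1..j}. e l = 2}"

definition v1 :: "(nat \<Rightarrow> nat) \<Rightarrow> nat \<Rightarrow> nat" where
  "v1 e j = j - v2 e j"

definition Fstar :: "nat \<Rightarrow> nat \<Rightarrow> real \<Rightarrow> real \<Rightarrow> (nat \<Rightarrow> nat) \<Rightarrow> real" where
  "Fstar k d \<alpha> \<beta> e = (\<Sum>j=1..k. min ((real d - (real (e j) - 1) * real (v1 e j)
        - (2 - real (e j)) * real (v2 e j)) * \<beta>) \<alpha>)"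

end

theory Submission
  imports Defs
begin

lemma v2_Suc: "v2 e (Suc j) = v2 e j + (if e (Suc j) = 2 then 1 else 0)"
proof -
  have "{l \<in> {1..Suc j}. e l = 2} = (if e (Suc j) = 2 then insert (Suc j) {l \<in> {1..j}. e l = 2} else {l \<in> {1..j}. e l = 2})"
    by (auto simp: le_Suc_eq)
  then show ?thesis unfolding v2_def by (simp add: card_insert_disjoint)
qed

lemma v2_le: "v2 e j \<le> j"
proof -
  have "v2 e j \<le> card {1..j}" unfolding v2_def by (rule card_mono) auto
  then show ?thesis by simp
qed

lemma v1_Suc: "v1 e (Suc j) = v1 e j + (if e (Suc j) = 2 then 0 else 1)"
  using v2_Suc[of e j] v2_le[of e j] unfolding v1_def by auto

lemma v1_0: "v1 e 0 = 0" and v2_0: "v2 e 0 = 0"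
  unfolding v1_def v2_def by auto

lemma v1_mono: "i \<le> j \<Longrightarrow> v1 e i \<le> v1 e j"
proof (induction j rule: dec_induct)
  case (step n) then show ?case using v1_Suc[of e n] by simp
qed simp

lemma v2_mono: "i \<le> j \<Longrightarrow> v2 e i \<le> v2 e j"
proof (induction j rule: dec_induct)
  case (step n) then show ?case using v2_Suc[of e n] by simp
qed simp

definition cc :: "(nat \<Rightarrow> nat) \<Rightarrow> nat \<Rightarrow> nat \<Rightarrow> real" where
  "cc e d j = real d - (real (e j) - 1) * real (v1 e j) - (2 - real (e j)) * real (v2 e j)"

lemma sum_cc: "(\<forall>i\<in>{1..j}. e i \<in> {1,2}) \<Longrightarrow> (\<Sum>i=1..j. cc e d i) = real j * real d - real (v1 e j) * real (v2 e j)"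
proof (induction j)
  case 0 then show ?case by (simp add: v1_0 v2_0)
next
  case (Suc j)
  then have IH: "(\<Sum>i=1..j. cc e d i) = real j * real d - real (v1 e j) * real (v2 e j)" by auto
  have "e (Suc j) \<in> {1,2}" using Suc.prems by auto
  then show ?case using IH v1_Suc[of e j] v2_Suc[of e j]
    by (auto simp: cc_def algebra_simps)
qed

lemma chord:
  fixes a b c \<alpha> \<beta> :: real
  assumes "a < b" "a \<le> c" "c \<le> b" "0 \<le> \<alpha>" "\<alpha> \<le> b*\<beta>" "\<beta>>0"
  shows "(b-a)*min (c*\<beta>) \<alpha> \<ge> (b-c)*min (a*\<beta>) \<alpha> + (c-a)*\<alpha>"
proof (cases "c*\<beta> \<ge> \<alpha>")
  case True
  have "(b-c)*min (a*\<beta>) \<alpha> \<le> (b-c)*\<alpha>" by (rule mult_left_mono) (use assms in auto)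
  then show ?thesis using True by (simp add: algebra_simps)
next
  case False
  have 1: "(b-c)*min (a*\<beta>) \<alpha> \<le> (b-c)*(a*\<beta>)" by (rule mult_left_mono) (use assms in auto)
  have 2: "(c-a)*\<alpha> \<le> (c-a)*(b*\<beta>)" by (rule mult_left_mono) (use assms in auto)
  have 3: "(b-c)*(a*\<beta>) + (c-a)*(b*\<beta>) = (b-a)*(c*\<beta>)" by (simp add: algebra_simps)
  show ?thesis using False 1 2 3 by simp
qed

theorem lemma2:
  fixes k d :: nat and \<alpha> \<beta> :: real and e :: "nat \<Rightarrow> nat"
  assumes "k \<ge> 1" and "d \<ge> k"
    and "\<beta> > 0" and "0 \<le> \<alpha>" and "\<alpha> \<le> real d * \<beta>"
    and "\<forall>j\<in>{1..k}. e j \<in> {1, 2}"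
    and "v1 e k \<ge> v2 e k"
  shows "Fstar k d \<alpha> \<beta> e \<ge> real (v1 e k) * \<alpha> + real (v2 e k) * min ((real d - real (v1 e k)) * \<beta>) \<alpha>
    \<and> ((\<forall>j\<in>{1..v1 e k}. e j = 1) \<longrightarrow>
         Fstar k d \<alpha> \<beta> e = real (v1 e k) * \<alpha> + real (v2 e k) * min ((real d - real (v1 e k)) * \<beta>) \<alpha>)"
proof -
  define m where "m = v1 e k"
  define a where "a = real d - real m"
  define fa where "fa = min (a * \<beta>) \<alpha>"
  have F: "Fstar k d \<alpha> \<beta> e = (\<Sum>j=1..k. min (cc e d j * \<beta>) \<alpha>)"
    unfolding Fstar_def cc_def by simp
  have v2k: "v2 e k \<le> k" by (rule v2_le)
  have kv: "k = m + v2 e k" using v2k unfolding m_def v1_def by simp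
  have mpos: "m > 0" using assms(1,7) kv unfolding m_def by linarith
  have mk: "m \<le> k" using kv by simp
  have cb: "a \<le> cc e d j \<and> cc e d j \<le> real d" if j: "j \<in> {1..k}" for j
  proof -
    have "v1 e j \<le> m" "v2 e j \<le> v2 e k" using j v1_mono v2_mono unfolding m_def by auto
    moreover have "e j \<in> {1,2}" using assms(6) j by auto
    ultimately show ?thesis using assms(7) unfolding cc_def a_def m_def by auto
  qed
  have each: "real m * min (cc e d j * \<beta>) \<alpha> \<ge> (real d - cc e d j) * fa + (cc e d j - a) * \<alpha>"
    if j: "j \<in> {1..k}" for j
    using chord[of a "real d" "cc e d j" \<alpha> \<beta>] cb[OF j] mpos assms(3,4,5)
    unfolding fa_def a_def by simp
  have "real m * Fstar k d \<alpha> \<beta> e = (\<Sum>j=1..k. real m * min (cc e d j * \<beta>) \<alpha>)"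
    unfolding F by (simp add: sum_distrib_left)
  also have "\<dots> \<ge> (\<Sum>j=1..k. (real d - cc e d j) * fa + (cc e d j - a) * \<alpha>)"
    by (rule sum_mono) (use each in auto)
  finally have A: "real m * Fstar k d \<alpha> \<beta> e \<ge> (\<Sum>j=1..k. (real d - cc e d j) * fa + (cc e d j - a) * \<alpha>)" .
  have S: "(\<Sum>j=1..k. cc e d j) = real k * real d - real m * real (v2 e k)"
    using sum_cc[of k e d] assms(6) unfolding m_def by simp
  have "(\<Sum>j=1..k. (real d - cc e d j) * fa + (cc e d j - a) * \<alpha>)
      = (real k * real d - (\<Sum>j=1..k. cc e d j)) * fa + ((\<Sum>j=1..k. cc e d j) - real k * a) * \<alpha>"
    by (simp add: sum.distrib sum_subtractf flip: sum_distrib_right)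
  also have "\<dots> = real m * (real (v2 e k) * fa + real m * \<alpha>)"
  proof -
    have "real k = real m + real (v2 e k)" using kv by simp
    then show ?thesis unfolding S a_def by (simp add: algebra_simps)
  qed
  finally have "real m * Fstar k d \<alpha> \<beta> e \<ge> real m * (real m * \<alpha> + real (v2 e k) * fa)"
    using A by (simp add: algebra_simps)
  then have ineq: "Fstar k d \<alpha> \<beta> e \<ge> real m * \<alpha> + real (v2 e k) * fa"
    using mpos by simp
  have eq: "Fstar k d \<alpha> \<beta> e = real m * \<alpha> + real (v2 e k) * fa" if ones: "\<forall>j\<in>{1..m}. e j = 1"
  proof -
    have z: "j \<le> m \<Longrightarrow> v2 e j = 0" for j
    proof (induction j)
      case (Suc j) then show ?case using v2_Suc[of e j] ones by auto
    qed (simp add: v2_0)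
    have t1: "min (cc e d j * \<beta>) \<alpha> = \<alpha>" if "j \<in> {1..m}" for j
      using that ones z[of j] assms(5) unfolding cc_def by auto
    have vm: "v1 e m = m" using z[of m] unfolding v1_def by simp
    have t2: "min (cc e d j * \<beta>) \<alpha> = fa" if j: "j \<in> {m+1..k}" for j
    proof -
      have j1: "v1 e (j - 1) \<ge> m" using vm v1_mono[of m "j-1" e] j by auto
      have j2: "v1 e j \<le> m" using v1_mono[of j k e] j unfolding m_def by auto
      have jj: "j = Suc (j - 1)" using j by auto
      have "e j \<noteq> 1"
      proof
        assume "e j = 1"
        then have "v1 e j = v1 e (j-1) + 1" using v1_Suc[of e "j-1"] jj by simp
        then show False using j1 j2 by simp
      qed
      then have "e j = 2" using assms(6) j mk by auto
      moreover have "v1 e j = m" using j1 j2 v1_mono[of "j-1" j e] by auto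
      ultimately show ?thesis unfolding cc_def fa_def a_def by simp
    qed
    have split: "{1..k} = {1..m} \<union> {m+1..k}" using mpos mk by auto
    have "Fstar k d \<alpha> \<beta> e = (\<Sum>j\<in>{1..m}. min (cc e d j * \<beta>) \<alpha>) + (\<Sum>j\<in>{m+1..k}. min (cc e d j * \<beta>) \<alpha>)"
      unfolding F split by (rule sum.union_disjoint) auto
    also have "\<dots> = real m * \<alpha> + real (k - m) * fa"
    proof -
      have "(\<Sum>j\<in>{1..m}. min (cc e d j * \<beta>) \<alpha>) = (\<Sum>j\<in>{1..m}. \<alpha>)" by (rule sum.cong) (use t1 in auto)
      moreover have "(\<Sum>j\<in>{m+1..k}. min (cc e d j * \<beta>) \<alpha>) = (\<Sum>j\<in>{m+1..k}. fa)" by (rule sum.cong) (use t2 in auto)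
      ultimately show ?thesis by simp
    qed
    finally show ?thesis using kv by simp
  qed
  show ?thesis using ineq eq unfolding m_def fa_def a_def by simp
qed

end
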